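(* Let $R\subseteq S$ be an extension of commutative rings such that $S$ is well-centered on $R$. If $M$ is a maximal ideal of $R$ with $MS\neq S$, then $MS$ is a maximal ideal of $S$.
   Context: All rings are commutative with identity. An extension ring $S$ of $R$ is well-centered on $R$ if for each $s\in S$ there is a unit $u$ of $S$ with $us\in R$. *)

theory Defs
  imports "HOL-Algebra.Algebra"
begin

definition well_centered :: "('a, 'b) ring_scheme \<Rightarrow> 'a set \<Rightarrow> bool" where
  "well_centered S R \<longleftrightarrow> (\<forall>s \<in> carrier S. \<exists>u \<in> Units S. u \<otimes>\<^bsub>S\<^esub> s \<in> R)"

end

theory Submission
  imports Defs
begin

theorem proposition3p2:
  fixes S :: "('a, 'b) ring_scheme" and R M :: "'a set"
  assumes "cring S"
    and "subring R S"
    and "well_centered S R"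
    and "maximalideal M (S\<lparr>carrier := R\<rparr>)"
    and "Idl\<^bsub>S\<^esub> M \<noteq> carrier S"
  shows "maximalideal (Idl\<^bsub>S\<^esub> M) S"
proof -
  interpret S: cring S by fact
  let ?R = "S\<lparr>carrier := R\<rparr>"
  interpret Mx: maximalideal M ?R by fact
  have RS: "R \<subseteq> carrier S" using subringE(1)[OF assms(2)] .
  have MR: "M \<subseteq> R" using Mx.a_subset by simp
  have MS: "M \<subseteq> carrier S" using MR RS by blast
  have ringR: "ring ?R" using S.subring_is_ring[OF assms(2)] .
  have IdI: "ideal (Idl\<^bsub>S\<^esub> M) S" using S.genideal_ideal[OF MS] .
  interpret I: ideal "Idl\<^bsub>S\<^esub> M" S by (rule IdI)
  have MI: "M \<subseteq> Idl\<^bsub>S\<^esub> M" using S.genideal_self[OF MS] .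
  show ?thesis
  proof (rule maximalidealI[OF IdI])
    show "carrier S \<noteq> Idl\<^bsub>S\<^esub> M" using assms(5) by metis
  next
    fix J assume J: "ideal J S" "Idl\<^bsub>S\<^esub> M \<subseteq> J" "J \<subseteq> carrier S"
    interpret J: ideal J S by (rule J(1))
    show "J = Idl\<^bsub>S\<^esub> M \<or> J = carrier S"
    proof (rule ccontr)
      assume nc: "\<not> (J = Idl\<^bsub>S\<^esub> M \<or> J = carrier S)"
      then obtain s where s: "s \<in> J" "s \<notin> Idl\<^bsub>S\<^esub> M" using J(2) by blast
      have sS: "s \<in> carrier S" using s J(3) by blast
      obtain u where u: "u \<in> Units S" "u \<otimes>\<^bsub>S\<^esub> s \<in> R"
        using assms(3) sS unfolding well_centered_def by blast
      define r where "r = u \<otimes>\<^bsub>S\<^esub> s"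
      have uS: "u \<in> carrier S" using u(1) by (simp add: S.Units_closed)
      have rJ: "r \<in> J" unfolding r_def using J.I_l_closed[OF s(1) uS] .
      have rR: "r \<in> R" using u(2) r_def by simp
      have "s = inv\<^bsub>S\<^esub> u \<otimes>\<^bsub>S\<^esub> r"
        unfolding r_def using u(1) sS uS
        by (simp add: S.m_assoc[symmetric] S.Units_inv_closed)
      have rM: "r \<notin> M"
      proof
        assume "r \<in> M"
        then have "inv\<^bsub>S\<^esub> u \<otimes>\<^bsub>S\<^esub> r \<in> Idl\<^bsub>S\<^esub> M"
          using MI I.I_l_closed S.Units_inv_closed[OF u(1)] by blast
        then show False using s(2) \<open>s = _\<close> by simp
      qed
      have JR: "ideal (J \<inter> R) ?R"
      proof (rule idealI[OF ringR])
        show "subgroup (J \<inter> R) (add_monoid ?R)"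
        proof -
          interpret RR: ring ?R by (rule ringR)
          show ?thesis
          proof (rule group.subgroupI[OF abelian_group.a_group[OF ring.is_abelian_group[OF ringR]]])
            show "J \<inter> R \<subseteq> carrier (add_monoid ?R)" by auto
            show "J \<inter> R \<noteq> {}" using J.additive_subgroup_axioms additive_subgroup.zero_closed subringE(2)[OF assms(2)] by blast
          next
            fix a assume a: "a \<in> J \<inter> R"
            have aS: "a \<in> carrier S" using a RS by blast
            have "\<ominus>\<^bsub>?R\<^esub> a = \<ominus>\<^bsub>S\<^esub> a"
              by (rule abelian_group.minus_equality[OF ring.is_abelian_group[OF ringR]]) (use a aS subringE(5)[OF assms(2)] in \<open>auto simp: S.r_neg S.l_neg\<close>)
            then show "inv\<^bsub>add_monoid ?R\<^esub> a \<in> J \<inter> R"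
              using a J.a_inv_closed subringE(5)[OF assms(2)] by (auto simp: a_inv_def)
          next
            fix a b assume "a \<in> J \<inter> R" "b \<in> J \<inter> R"
            then show "a \<otimes>\<^bsub>add_monoid ?R\<^esub> b \<in> J \<inter> R"
              using J.a_closed subringE(7)[OF assms(2)] by auto
          qed
        qed
      next
        fix a x assume "a \<in> J \<inter> R" "x \<in> carrier ?R"
        then show "x \<otimes>\<^bsub>?R\<^esub> a \<in> J \<inter> R"
          using J.I_l_closed RS subringE(6)[OF assms(2)] by auto
      next
        fix a x assume "a \<in> J \<inter> R" "x \<in> carrier ?R"
        then show "a \<otimes>\<^bsub>?R\<^esub> x \<in> J \<inter> R"
          using J.I_r_closed RS subringE(6)[OF assms(2)] by auto
      qed
      have "M \<subseteq> J \<inter> R" using MI J(2) MR by blast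
      moreover have "J \<inter> R \<subseteq> carrier ?R" by simp
      ultimately have "J \<inter> R = M \<or> J \<inter> R = carrier ?R"
        using Mx.I_maximal[OF JR] by blast
      moreover have "J \<inter> R \<noteq> M" using rJ rR rM by blast
      ultimately have "\<one>\<^bsub>S\<^esub> \<in> J" using subringE(3)[OF assms(2)] by auto
      then have "J = carrier S" using J.one_imp_carrier by simp
      then show False using nc by simp
    qed
  qed
qed

end
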